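(* For every $n\ge2$, the Lie group of invertible $n\times n$ upper triangular real matrices has the topological $R_\infty$-property.
   Context: For an automorphism $\varphi$ of a group $G$, the $\varphi$-twisted conjugacy classes are the equivalence classes of the relation $x\sim_\varphi y$ iff $y=gx\varphi(g)^{-1}$ for some $g\in G$; $R(\varphi)\in\mathbb{N}\cup\{\infty\}$ is their number. A topological group $G$ has the topological $R_\infty$-property if $R(\varphi)=\infty$ for every automorphism $\varphi$ of $G$ that is a homeomorphism (for a Lie group: every continuous automorphism). *)

theory Defs
  imports "HOL-Analysis.Analysis"
begin

text \<open>Invertible upper triangular real matrices, indices ordered by the linear order of the
  finite index type 'n (any finite linearly ordered type is order-isomorphic to {1..n}).\<close>
definition upper_triangular_group :: "(real^('n::{finite,wellorder})^('n::{finite,wellorder})) set" where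
  "upper_triangular_group =
     {A.  invertible A \<and> (\<forall>i j. j < i \<longrightarrow> A $ i $ j = 0)}"

definition twisted_conj_rel ::
  "(real^'n^'n) set \<Rightarrow> (real^'n^'n \<Rightarrow> real^'n^'n) \<Rightarrow> ((real^'n^'n) \<times> (real^'n^'n)) set" where
  "twisted_conj_rel G \<phi> =
     {(x, y). x \<in> G \<and> y \<in> G \<and> (\<exists>g\<in>G. y = g ** x ** matrix_inv (\<phi> g))}"

definition reidemeister_infinite ::
  "(real^'n^'n) set \<Rightarrow> (real^'n^'n \<Rightarrow> real^'n^'n) \<Rightarrow> bool" where
  "reidemeister_infinite G \<phi> \<longleftrightarrow> infinite (G // twisted_conj_rel G \<phi>)"

definition top_automorphism ::
  "(real^'n^'n) set \<Rightarrow> (real^'n^'n \<Rightarrow> real^'n^'n) \<Rightarrow> bool" where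
  "top_automorphism G \<phi> \<longleftrightarrow>
     (\<exists>\<psi>. homeomorphism G G \<phi> \<psi>) \<and> (\<forall>x\<in>G. \<forall>y\<in>G. \<phi> (x ** y) = \<phi> x ** \<phi> y)"

definition top_R_infinity :: "(real^'n^'n) set \<Rightarrow> bool" where
  "top_R_infinity G \<longleftrightarrow> (\<forall>\<phi>. top_automorphism G \<phi> \<longrightarrow> reidemeister_infinite G \<phi>)"

end

theory Submission
  imports Defs
begin


definition UT :: "real^('n::{finite,wellorder})^('n::{finite,wellorder}) \<Rightarrow> bool" where
  "UT A \<longleftrightarrow> (\<forall>i j. j < i \<longrightarrow> A $ i $ j = 0)"

definition Nm :: "'n::{finite,wellorder} \<Rightarrow> 'n \<Rightarrow> real \<Rightarrow> real^('n::{finite,wellorder})^('n::{finite,wellorder})" where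
  "Nm i j t = (\<chi> k l. if k = i \<and> l = j then t else 0)"

definition Em :: "'n::{finite,wellorder} \<Rightarrow> 'n \<Rightarrow> real \<Rightarrow> real^('n::{finite,wellorder})^('n::{finite,wellorder})" where
  "Em i j t = mat 1 + Nm i j t"

lemma matrix_add_rdistrib: "((A + B) ** C) = (A ** C) + (B ** C)"
  by (vector matrix_matrix_mult_def sum.distrib[symmetric] field_simps)

lemma mult_Nm_nth[simp]: "(A ** Nm i j t) $ k $ l = (if l = j then A $ k $ i * t else 0)"
  by (auto simp: matrix_matrix_mult_def Nm_def if_distrib sum.delta cong: if_cong)

lemma Nm_mult_nth[simp]: "(Nm i j t ** A) $ k $ l = (if k = i then t * A $ j $ l else 0)"
  by (auto simp: matrix_matrix_mult_def Nm_def if_distrib if_distribR sum.delta cong: if_cong)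

lemma Nm_nth[simp]: "Nm i j t $ k $ l = (if k = i \<and> l = j then t else 0)"
  by (simp add: Nm_def)

lemma diag_mult:
  assumes "UT A" "UT B"
  shows "(A ** B) $ i $ i = A $ i $ i * B $ i $ i"
proof -
  have "(A ** B) $ i $ i = (\<Sum>k\<in>UNIV. A $ i $ k * B $ k $ i)"
    by (simp add: matrix_matrix_mult_def)
  also have "\<dots> = (\<Sum>k\<in>UNIV. if k = i then A $ i $ i * B $ i $ i else 0)"
  proof (rule sum.cong)
    fix k assume "k \<in> (UNIV::'a set)"
    show "A $ i $ k * B $ k $ i = (if k = i then A $ i $ i * B $ i $ i else 0)"
      using assms unfolding UT_def by (cases "k < i"; cases "i < k") auto
  qed simp
  finally show ?thesis by simp
qed

lemma UT_mult:
  assumes "UT A" "UT B"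
  shows "UT (A ** B)"
  unfolding UT_def
proof (intro allI impI)
  fix i j :: 'a assume ji: "j < i"
  have "(A ** B) $ i $ j = (\<Sum>k\<in>UNIV. A $ i $ k * B $ k $ j)"
    by (simp add: matrix_matrix_mult_def)
  also have "\<dots> = 0"
  proof (rule sum.neutral, intro ballI)
    fix k assume "k \<in> (UNIV::'a set)"
    show "A $ i $ k * B $ k $ j = 0"
      using assms ji unfolding UT_def by (cases "k < i") (auto simp: not_less dest: order.strict_trans2)
  qed
  finally show "(A ** B) $ i $ j = 0" .
qed

lemma G_iff: "A \<in> upper_triangular_group \<longleftrightarrow> invertible A \<and> UT A"
  by (simp add: upper_triangular_group_def UT_def)

lemma G_diag_nz:
  assumes "A \<in> upper_triangular_group"
  shows "A $ i $ i \<noteq> 0"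
proof
  assume 0: "A $ i $ i = 0"
  have "det A = prod (\<lambda>i. A$i$i) UNIV"
    using assms by (intro det_upperdiagonal) (auto simp: G_iff UT_def)
  also have "\<dots> = 0" using 0 by (intro prod_zero) auto
  finally show False using assms by (simp add: G_iff invertible_det_nz)
qed

lemma G_mult: "A \<in> upper_triangular_group \<Longrightarrow> B \<in> upper_triangular_group \<Longrightarrow> A ** B \<in> upper_triangular_group"
  by (simp add: G_iff invertible_mult UT_mult)

lemma Nm_Nm: "i \<noteq> j \<Longrightarrow> Nm i j s ** Nm i j t = 0"
  by (simp add: vec_eq_iff)

lemma Em_add: "i \<noteq> j \<Longrightarrow> Em i j s ** Em i j t = Em i j (s + t)"
  by (simp add: Em_def matrix_add_ldistrib matrix_add_rdistrib vec_eq_iff)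

lemma Em_0[simp]: "Em i j 0 = mat 1"
  by (simp add: Em_def vec_eq_iff)

lemma Em_nth: "Em i j t $ k $ l = (if k = l then 1 else 0) + (if k = i \<and> l = j then t else 0)"
  by (simp add: Em_def mat_def)

lemma Em_G: "i < j \<Longrightarrow> Em i j t \<in> upper_triangular_group"
  unfolding G_iff
proof
  assume ij: "i < j"
  show "invertible (Em i j t)" unfolding invertible_def
    by (rule exI[of _ "Em i j (-t)"]) (use ij in \<open>simp add: Em_add\<close>)
  show "UT (Em i j t)" using ij by (auto simp: UT_def Em_nth)
qed



abbreviation GG where "GG \<equiv> upper_triangular_group"

definition Cs :: "(real^('n::{finite,wellorder})^('n::{finite,wellorder})) set" where
  "Cs = {c \<in> GG. \<exists>a\<in>GG. \<exists>b\<in>GG. a ** b = b ** a ** c}"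

definition Zs :: "(real^('n::{finite,wellorder})^('n::{finite,wellorder})) set" where
  "Zs = {x \<in> Cs. \<forall>c\<in>Cs. x ** c = c ** x}"

lemma Cs_diag:
  assumes "c \<in> Cs" shows "c $ i $ i = 1"
proof -
  obtain a b where ab: "a \<in> GG" "b \<in> GG" "a ** b = b ** a ** c" "c \<in> GG"
    using assms by (auto simp: Cs_def)
  have U: "UT a" "UT b" "UT c" using ab by (auto simp: G_iff)
  have "a $ i $ i * b $ i $ i = (a ** b) $ i $ i"
    using U by (simp add: diag_mult)
  also have "\<dots> = (b ** a ** c) $ i $ i" using ab(3) by simp
  also have "\<dots> = (b ** a) $ i $ i * c $ i $ i"
    using U by (intro diag_mult UT_mult)
  also have "\<dots> = (a $ i $ i * b $ i $ i) * c $ i $ i"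
    using U by (simp add: diag_mult)
  finally have "(a $ i $ i * b $ i $ i) * 1 = (a $ i $ i * b $ i $ i) * c $ i $ i" by simp
  moreover have "a $ i $ i * b $ i $ i \<noteq> 0" using G_diag_nz[OF ab(1)] G_diag_nz[OF ab(2)] by simp
  ultimately show ?thesis by (metis mult_left_cancel)
qed

definition Dm :: "'n::{finite,wellorder} \<Rightarrow> real \<Rightarrow> real^('n::{finite,wellorder})^('n::{finite,wellorder})" where
  "Dm i r = (\<chi> k l. if k = l then (if k = i then r else 1) else 0)"

lemma Dm_nth[simp]: "Dm i r $ k $ l = (if k = l then (if k = i then r else 1) else 0)"
  by (simp add: Dm_def)

lemma Dm_mult_nth[simp]: "(Dm i r ** A) $ k $ l = (if k = i then r else 1) * A $ k $ l"
proof -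
  have "(Dm i r ** A) $ k $ l = (\<Sum>m\<in>UNIV. if m = k then (if k = i then r else 1) * A $ k $ l else 0)"
    unfolding matrix_matrix_mult_def vec_lambda_beta by (rule sum.cong) auto
  then show ?thesis by simp
qed

lemma Dm_G: "r \<noteq> 0 \<Longrightarrow> Dm i r \<in> GG"
  unfolding G_iff
proof
  assume r: "r \<noteq> 0"
  have "Dm i r ** Dm i (1/r) = mat 1" "Dm i (1/r) ** Dm i r = mat 1"
    using r by (simp_all add: vec_eq_iff mat_def)
  then show "invertible (Dm i r)" unfolding invertible_def by blast
  show "UT (Dm i r)" by (auto simp: UT_def)
qed

lemma Em_Cs:
  assumes ij: "i < j" shows "Em i j t \<in> Cs"
proof -
  have "Dm i 2 ** Em i j (2*t) = Em i j (2*t) ** Dm i 2 ** Em i j t"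
    unfolding Em_def matrix_add_ldistrib matrix_add_rdistrib matrix_mul_lid matrix_mul_rid
    using ij by (simp add: vec_eq_iff mat_def)
  then show ?thesis unfolding Cs_def using Em_G[OF ij] Dm_G[of 2 i] by auto
qed

definition lo :: "'n::{finite,wellorder}" where "lo = Min UNIV"
definition hi :: "'n::{finite,wellorder}" where "hi = Max UNIV"

lemma lo_le: "lo \<le> i" unfolding lo_def by (rule Min_le) auto
lemma hi_ge: "i \<le> hi" unfolding hi_def by (rule Max_ge) auto

lemma lo_hi:
  assumes "CARD('n::{finite,wellorder}) \<ge> 2" shows "(lo::'n) < hi"
proof (rule ccontr)
  assume "\<not> (lo::'n) < hi"
  then have "\<And>i::'n. i = lo" using lo_le hi_ge by (metis antisym not_less order.trans)
  then have "(UNIV::'n set) \<subseteq> {lo}" by auto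
  then have "CARD('n) \<le> 1" by (metis card.empty card.insert card_mono empty_iff finite.intros(1) finite.intros(2) One_nat_def)
  then show False using assms by simp
qed

lemma UT_Em_commute:
  assumes "UT x" and ij: "i < j" and c: "x ** Em i j 1 = Em i j 1 ** x"
  shows "(if l = j then x $ k $ i else 0) = (if k = i then x $ j $ l else 0)"
proof -
  have "x ** Nm i j 1 = Nm i j 1 ** x"
    using c unfolding Em_def matrix_add_ldistrib matrix_add_rdistrib matrix_mul_lid matrix_mul_rid
    by simp
  then have "(x ** Nm i j 1) $ k $ l = (Nm i j 1 ** x) $ k $ l" by simp
  then show ?thesis by (simp only: mult_Nm_nth Nm_mult_nth mult_1_right mult_1_left)
qed

lemma Zs_form:
  fixes x :: "real^('n::{finite,wellorder})^('n::{finite,wellorder})"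
  assumes lh: "(lo::'n::{finite,wellorder}) < hi" and x: "x \<in> Zs"
  shows "x = Em lo hi (x $ lo $ hi)"
proof -
  have xC: "x \<in> Cs" using x by (simp add: Zs_def)
  then have U: "UT x" by (simp add: Cs_def G_iff)
  have com: "(if l = j then x $ k $ i else 0) = (if k = i then x $ j $ l else 0)" if "i < j" for i j k l
  proof (rule UT_Em_commute[OF U that])
    show "x ** Em i j 1 = Em i j 1 ** x" using x Em_Cs[OF that] by (simp add: Zs_def)
  qed
  show ?thesis
  proof (subst vec_eq_iff, intro allI, subst vec_eq_iff, intro allI)
    fix k l :: 'n
    show "x $ k $ l = Em lo hi (x $ lo $ hi) $ k $ l"
    proof (cases "k = l")
      case True then show ?thesis using Cs_diag[OF xC] lh by (auto simp: Em_nth)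
    next
      case kl: False
      show ?thesis
      proof (cases "l = hi")
        case False
        then have "l < hi" using hi_ge[of l] by simp
        from com[OF this, of hi k] kl False show ?thesis by (simp add: Em_nth)
      next
        case lhi: True
        show ?thesis
        proof (cases "k = lo")
          case True then show ?thesis using lhi kl by (simp add: Em_nth)
        next
          case False
          then have "lo < k" using lo_le[of k] by simp
          from com[OF this, of l lo] kl False lhi show ?thesis by (simp add: Em_nth)
        qed
      qed
    qed
  qed
qed

lemma Em_Zs:
  assumes lh: "(lo::'n::{finite,wellorder}) < hi"
  shows "(Em lo hi t :: real^('n::{finite,wellorder})^('n::{finite,wellorder})) \<in> Zs"
  unfolding Zs_def
proof (intro CollectI conjI ballI)
  show "(Em lo hi t :: real^('n::{finite,wellorder})^('n::{finite,wellorder})) \<in> Cs" using Em_Cs[OF lh] by simp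
  fix c :: "real^('n::{finite,wellorder})^('n::{finite,wellorder})" assume cC: "c \<in> Cs"
  then have U: "UT c" by (simp add: Cs_def G_iff)
  have r: "c $ hi $ l = (if l = hi then 1 else 0)" for l
    using U Cs_diag[OF cC] hi_ge[of l] by (auto simp: UT_def)
  have cl: "c $ k $ lo = (if k = lo then 1 else 0)" for k
    using U Cs_diag[OF cC] lo_le[of k] by (auto simp: UT_def)
  show "(Em lo hi t :: real^('n::{finite,wellorder})^('n::{finite,wellorder})) ** c = c ** Em lo hi t"
    unfolding Em_def matrix_add_ldistrib matrix_add_rdistrib matrix_mul_lid matrix_mul_rid
    by (simp add: vec_eq_iff r cl)
qed

lemma mat1_G: "mat 1 \<in> GG"
  unfolding G_iff
proof
  show "invertible (mat 1 :: real^('a::{finite,wellorder})^('a::{finite,wellorder}))" unfolding invertible_def by (rule exI[of _ "mat 1"]) simp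
  show "UT (mat 1 :: real^('a::{finite,wellorder})^('a::{finite,wellorder}))" by (simp add: UT_def mat_def)
qed

lemma add_cont_linear:
  fixes h :: "real \<Rightarrow> real"
  assumes add: "\<And>x y. h (x + y) = h x + h y" and cont: "continuous_on UNIV h"
  shows "h x = x * h 1"
proof -
  have h0: "h 0 = 0" using add[of 0 0] by simp
  have hneg: "h (- y) = - h y" for y using add[of y "-y"] h0 by simp
  have hnat: "h (of_nat n * y) = of_nat n * h y" for n y
    by (induction n) (auto simp: h0 distrib_right add)
  have hint: "h (of_int m * y) = of_int m * h y" for m y
  proof (cases "m \<ge> 0")
    case True then show ?thesis using hnat[of "nat m" y] by simp
  next
    case False
    then have "of_int m * y = - (of_nat (nat (-m)) * y)" by simp
    then show ?thesis using hnat[of "nat (-m)" y] hneg False by simp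
  qed
  have rat: "h q = q * h 1" if qR: "q \<in> \<rat>" for q
  proof -
    obtain a b where ab: "b > 0" "q = of_int a / of_int b" using Rats_cases'[OF qR] by blast
    have e: "of_int b * q = of_int a * 1" using ab by simp
    have "of_int b * h q = h (of_int b * q)" by (simp add: hint)
    also have "\<dots> = of_int a * h 1" unfolding e by (rule hint)
    finally have B: "of_int b * h q = of_int a * h 1" .
    have nz: "(of_int b :: real) \<noteq> 0" using ab(1) by simp
    have "q * h 1 = (of_int a * h 1) / of_int b" using ab(2) by simp
    also have "\<dots> = (of_int b * h q) / of_int b" by (simp only: B)
    also have "\<dots> = h q" using nz by simp
    finally show ?thesis by simp
  qed
  have "closed {x. h x = x * h 1}"
    by (rule closed_Collect_eq[OF cont]) (intro continuous_intros)
  moreover have "\<rat> \<subseteq> {x. h x = x * h 1}" using rat by blast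
  ultimately have "closure \<rat> \<subseteq> {x. h x = x * h 1}" by (rule closure_minimal[rotated])
  then show ?thesis using Rats_closure_real by blast
qed

definition ff :: "real^('n::{finite,wellorder})^('n::{finite,wellorder}) \<Rightarrow> real" where
  "ff A = A $ lo $ lo / A $ hi $ hi"

lemma ff_mult: "A \<in> GG \<Longrightarrow> B \<in> GG \<Longrightarrow> ff (A ** B) = ff A * ff B"
  by (simp add: ff_def G_iff diag_mult)

lemma ff_nz: "A \<in> GG \<Longrightarrow> ff A \<noteq> 0"
  by (simp add: ff_def G_diag_nz)

lemma conj_Em:
  fixes A :: "real^('n::{finite,wellorder})^('n::{finite,wellorder})"
  assumes A: "A \<in> GG" and lh: "(lo::'n) < hi"
  shows "A ** Em lo hi t = Em lo hi (ff A * t) ** A"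
proof -
  have U: "UT A" using A by (simp add: G_iff)
  have r: "l \<noteq> hi \<Longrightarrow> A $ hi $ l = 0" for l
    using U hi_ge[of l] by (auto simp: UT_def)
  have cl: "k \<noteq> lo \<Longrightarrow> A $ k $ lo = 0" for k
    using U lo_le[of k] by (auto simp: UT_def)
  have nz: "A $ hi $ hi \<noteq> 0" using G_diag_nz[OF A] .
  show ?thesis
    unfolding Em_def matrix_add_ldistrib matrix_add_rdistrib matrix_mul_lid matrix_mul_rid
  proof (subst vec_eq_iff, intro allI, subst vec_eq_iff, intro allI)
    fix k l
    show "(A + A ** Nm lo hi t) $ k $ l = (A + Nm lo hi (ff A * t) ** A) $ k $ l"
      unfolding vector_add_component mult_Nm_nth Nm_mult_nth ff_def
      using nz r cl by auto
  qed
qed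

lemma cancel_right:
  assumes A: "A \<in> GG" and e: "X ** A = Y ** A"
  shows "X = Y"
proof -
  obtain B where B: "A ** B = mat 1" using A by (auto simp: G_iff invertible_def)
  have "X = (X ** A) ** B" by (simp add: B flip: matrix_mul_assoc)
  also have "\<dots> = (Y ** A) ** B" by (simp only: e)
  also have "\<dots> = Y" by (simp add: B flip: matrix_mul_assoc)
  finally show ?thesis .
qed

context
  fixes \<phi> :: "real^('n::{finite,wellorder})^('n::{finite,wellorder}) \<Rightarrow> real^('n::{finite,wellorder})^('n::{finite,wellorder})"
  assumes aut: "top_automorphism GG \<phi>"
begin

lemma hom: "\<exists>\<psi>. homeomorphism GG GG \<phi> \<psi>"
  using aut unfolding top_automorphism_def by (rule conjunct1)

lemma phi_mult: "x \<in> GG \<Longrightarrow> y \<in> GG \<Longrightarrow> \<phi> (x ** y) = \<phi> x ** \<phi> y"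
  using aut unfolding top_automorphism_def by blast

lemma phi_img: "\<phi> ` GG = GG"
  using hom unfolding homeomorphism_def by blast

lemma phi_G: "x \<in> GG \<Longrightarrow> \<phi> x \<in> GG"
  using phi_img by blast

lemma phi_inj: "x \<in> GG \<Longrightarrow> y \<in> GG \<Longrightarrow> \<phi> x = \<phi> y \<Longrightarrow> x = y"
proof -
  assume xy: "x \<in> GG" "y \<in> GG" "\<phi> x = \<phi> y"
  obtain \<psi> where p: "\<forall>z\<in>GG. \<psi> (\<phi> z) = z" using hom unfolding homeomorphism_def by blast
  have "x = \<psi> (\<phi> x)" using p xy(1) by simp
  also have "\<dots> = \<psi> (\<phi> y)" using xy(3) by simp
  also have "\<dots> = y" using p xy(2) by simp
  finally show "x = y" .
qed

lemma phi_surj: "y \<in> GG \<Longrightarrow> \<exists>x\<in>GG. y = \<phi> x"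
  using phi_img by blast

lemma phi_cont: "continuous_on GG \<phi>"
  using hom unfolding homeomorphism_def by blast

lemma phi_one: "\<phi> (mat 1) = mat 1"
proof -
  have "mat 1 ** \<phi> (mat 1) = \<phi> (mat 1) ** \<phi> (mat 1)"
    using phi_mult[OF mat1_G mat1_G] by simp
  then have "mat 1 = \<phi> (mat 1)" by (rule cancel_right[OF phi_G[OF mat1_G]])
  then show ?thesis by simp
qed

lemma phi_Cs: "c \<in> Cs \<Longrightarrow> \<phi> c \<in> Cs"
proof -
  assume "c \<in> Cs"
  then obtain a b where ab: "a \<in> GG" "b \<in> GG" "c \<in> GG" "a ** b = b ** a ** c"
    by (auto simp: Cs_def)
  have "\<phi> a ** \<phi> b = \<phi> b ** \<phi> a ** \<phi> c"
  proof -
    have "\<phi> a ** \<phi> b = \<phi> (a ** b)" using ab(1,2) by (simp add: phi_mult)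
    also have "\<dots> = \<phi> (b ** a ** c)" using ab(4) by simp
    also have "\<dots> = \<phi> b ** \<phi> a ** \<phi> c" using ab(1-3) by (simp add: phi_mult G_mult)
    finally show ?thesis .
  qed
  then show "\<phi> c \<in> Cs" using ab phi_G unfolding Cs_def by blast
qed

lemma phi_Cs_surj: "c \<in> Cs \<Longrightarrow> \<exists>c0\<in>Cs. c = \<phi> c0"
proof -
  assume "c \<in> Cs"
  then obtain a b where ab: "a \<in> GG" "b \<in> GG" "c \<in> GG" "a ** b = b ** a ** c"
    by (auto simp: Cs_def)
  obtain a0 b0 c0 where 0: "a0 \<in> GG" "b0 \<in> GG" "c0 \<in> GG" "a = \<phi> a0" "b = \<phi> b0" "c = \<phi> c0"
    using phi_surj[OF ab(1)] phi_surj[OF ab(2)] phi_surj[OF ab(3)] by blast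
  have "\<phi> (a0 ** b0) = \<phi> a0 ** \<phi> b0" using 0(1,2) by (rule phi_mult)
  also have "\<dots> = a ** b" using 0(4,5) by simp
  also have "\<dots> = b ** a ** c" by (rule ab(4))
  also have "\<dots> = \<phi> b0 ** \<phi> a0 ** \<phi> c0" using 0(4-6) by simp
  also have "\<dots> = \<phi> (b0 ** a0 ** c0)" using 0(1-3) by (simp add: phi_mult G_mult)
  finally have "a0 ** b0 = b0 ** a0 ** c0"
    by (rule phi_inj[OF G_mult[OF 0(1,2)] G_mult[OF G_mult[OF 0(2,1)] 0(3)]])
  then show ?thesis using 0 unfolding Cs_def by blast
qed

lemma phi_Zs: "x \<in> Zs \<Longrightarrow> \<phi> x \<in> Zs"
proof -
  assume x: "x \<in> Zs"
  then have xC: "x \<in> Cs" and com: "\<And>c. c \<in> Cs \<Longrightarrow> x ** c = c ** x" by (auto simp: Zs_def)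
  have xG: "x \<in> GG" using xC by (simp add: Cs_def)
  have "\<phi> x ** c = c ** \<phi> x" if c: "c \<in> Cs" for c
  proof -
    obtain c0 where c0: "c0 \<in> Cs" "c = \<phi> c0" using phi_Cs_surj[OF c] by blast
    have c0G: "c0 \<in> GG" using c0 by (simp add: Cs_def)
    have "\<phi> x ** c = \<phi> (x ** c0)" using c0 xG c0G by (simp add: phi_mult)
    also have "\<dots> = \<phi> (c0 ** x)" using com[OF c0(1)] by simp
    also have "\<dots> = c ** \<phi> x" using c0 xG c0G by (simp add: phi_mult)
    finally show ?thesis .
  qed
  then show "\<phi> x \<in> Zs" using phi_Cs[OF xC] by (simp add: Zs_def)
qed

lemma ff_phi:
  assumes lh: "(lo::'n) < hi" and A: "A \<in> GG"
  shows "ff (\<phi> A) = ff A"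
proof -
  define ps where "ps t = \<phi> (Em lo hi t) $ lo $ hi" for t
  have EG: "(Em lo hi t :: real^('n::{finite,wellorder})^('n::{finite,wellorder})) \<in> GG" for t using Em_G[OF lh] .
  have phiE: "\<phi> (Em lo hi t) = Em lo hi (ps t)" for t
    unfolding ps_def by (rule Zs_form[OF lh phi_Zs[OF Em_Zs[OF lh]]])
  have Enth: "(Em lo hi s :: real^('n::{finite,wellorder})^('n::{finite,wellorder})) $ lo $ hi = s" for s using lh by (simp add: Em_nth)
  have Einj: "s = t" if "(Em lo hi s :: real^('n::{finite,wellorder})^('n::{finite,wellorder})) = Em lo hi t" for s t
    using Enth[of s] Enth[of t] that by metis
  have add: "ps (s + t) = ps s + ps t" for s t
  proof -
    have "Em lo hi (ps (s+t)) = \<phi> (Em lo hi (s+t))" by (simp add: phiE)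
    also have "\<dots> = \<phi> (Em lo hi s ** Em lo hi t)" using lh by (simp add: Em_add)
    also have "\<dots> = \<phi> (Em lo hi s) ** \<phi> (Em lo hi t)" by (rule phi_mult[OF EG EG])
    also have "\<dots> = Em lo hi (ps s + ps t)" using lh by (simp add: phiE Em_add)
    finally show ?thesis by (rule Einj)
  qed
  have Nsc: "(Em lo hi t :: real^('n::{finite,wellorder})^('n::{finite,wellorder})) = mat 1 + t *\<^sub>R Nm lo hi 1" for t
    by (simp add: vec_eq_iff Em_def)
  have c1: "continuous_on UNIV (\<lambda>t. (Em lo hi t :: real^('n::{finite,wellorder})^('n::{finite,wellorder})))"
    unfolding Nsc by (intro continuous_intros)
  have c2: "continuous_on UNIV (\<lambda>t. \<phi> (Em lo hi t))"
    by (rule continuous_on_compose2[OF phi_cont c1]) (auto intro: EG)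
  have cont: "continuous_on UNIV ps"
    unfolding ps_def by (intro continuous_intros c2)
  have lin: "ps x = x * ps 1" for x by (rule add_cont_linear[OF add cont])
  have p1: "ps 1 \<noteq> 0"
  proof
    assume "ps 1 = 0"
    then have "\<phi> (Em lo hi 1) = \<phi> (mat 1)" using phiE[of 1] by (simp add: phi_one)
    then have "(Em lo hi 1 :: real^('n::{finite,wellorder})^('n::{finite,wellorder})) = mat 1" by (rule phi_inj[OF EG mat1_G])
    then have "(Em lo hi 1 :: real^('n::{finite,wellorder})^('n::{finite,wellorder})) $ lo $ hi = (mat 1 :: real^('n::{finite,wellorder})^('n::{finite,wellorder})) $ lo $ hi" by simp
    then show False using lh by (simp add: Em_nth mat_def)
  qed
  have "Em lo hi (ff (\<phi> A) * ps 1) ** \<phi> A = \<phi> A ** Em lo hi (ps 1)"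
    by (rule conj_Em[OF phi_G[OF A] lh, symmetric])
  also have "\<dots> = \<phi> (A ** Em lo hi 1)" using phiE phi_mult[OF A EG] by simp
  also have "\<dots> = \<phi> (Em lo hi (ff A * 1) ** A)" using conj_Em[OF A lh] by simp
  also have "\<dots> = Em lo hi (ff A * ps 1) ** \<phi> A" using phi_mult[OF EG A] phiE lin[of "ff A"] by simp
  finally have "(Em lo hi (ff (\<phi> A) * ps 1) :: real^('n::{finite,wellorder})^('n::{finite,wellorder})) = Em lo hi (ff A * ps 1)" by (rule cancel_right[OF phi_G[OF A]])
  then have "ff (\<phi> A) * ps 1 = ff A * ps 1" by (rule Einj)
  then show ?thesis using p1 by simp
qed

lemma class_inv:
  assumes lh: "(lo::'n) < hi" and r: "(x, y) \<in> twisted_conj_rel GG \<phi>"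
  shows "ff x = ff y"
proof -
  obtain g where g: "x \<in> GG" "y \<in> GG" "g \<in> GG" "y = g ** x ** matrix_inv (\<phi> g)"
    using r unfolding twisted_conj_rel_def by blast
  have pg: "\<phi> g \<in> GG" using phi_G[OF g(3)] .
  have inv: "matrix_inv (\<phi> g) ** \<phi> g = mat 1"
  proof -
    have "\<exists>A'. \<phi> g ** A' = mat 1 \<and> A' ** \<phi> g = mat 1" using pg by (simp add: G_iff invertible_def)
    then have "\<phi> g ** matrix_inv (\<phi> g) = mat 1 \<and> matrix_inv (\<phi> g) ** \<phi> g = mat 1"
      unfolding matrix_inv_def by (rule someI_ex)
    then show ?thesis by simp
  qed
  have "y ** \<phi> g = g ** x ** (matrix_inv (\<phi> g) ** \<phi> g)" using g(4) by (simp add: matrix_mul_assoc)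
  also have "\<dots> = g ** x" by (simp add: inv)
  finally have e: "y ** \<phi> g = g ** x" .
  have "ff y * ff g = ff (y ** \<phi> g)" using ff_mult[OF g(2) pg] ff_phi[OF lh g(3)] by simp
  also have "\<dots> = ff g * ff x" using e ff_mult[OF g(3) g(1)] by simp
  finally show ?thesis using ff_nz[OF g(3)] by simp
qed

end


lemma infinite_classes:
  fixes \<phi> :: "real^('n::{finite,wellorder})^('n::{finite,wellorder}) \<Rightarrow> real^('n::{finite,wellorder})^('n::{finite,wellorder})"
  assumes aut: "top_automorphism GG \<phi>" and lh: "(lo::'n) < hi"
  shows "reidemeister_infinite GG \<phi>"
  unfolding reidemeister_infinite_def
proof
  let ?R = "twisted_conj_rel GG \<phi>"
  assume fin: "finite (GG // ?R)"
  have sub: "ff ` (GG :: (real^('n::{finite,wellorder})^('n::{finite,wellorder})) set) \<subseteq> (\<lambda>X. ff (SOME x. x \<in> X)) ` (GG // ?R)" (is "_ \<subseteq> ?S")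
  proof
    fix v assume "v \<in> ff ` (GG :: (real^('n::{finite,wellorder})^('n::{finite,wellorder})) set)"
    then obtain x :: "real^('n::{finite,wellorder})^('n::{finite,wellorder})" where x: "x \<in> GG" "v = ff x" by blast
    have xx: "(x, x) \<in> ?R"
    proof -
      have "matrix_inv (\<phi> (mat 1)) = (mat 1 :: real^('n::{finite,wellorder})^('n::{finite,wellorder}))"
        unfolding phi_one[OF aut] matrix_inv_def
        by (rule some_equality) auto
      then have "x = mat 1 ** x ** matrix_inv (\<phi> (mat 1))" by simp
      then show ?thesis unfolding twisted_conj_rel_def using x mat1_G by blast
    qed
    let ?X = "?R `` {x}"
    have XQ: "?X \<in> GG // ?R" using x(1) by (rule quotientI)
    have "x \<in> ?X" using xx by blast
    then have "(SOME z. z \<in> ?X) \<in> ?X" by (rule someI)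
    then have "(x, SOME z. z \<in> ?X) \<in> ?R" by blast
    then have "ff (SOME z. z \<in> ?X) = v" using class_inv[OF aut lh] x(2) by metis
    then show "v \<in> ?S" using XQ by (metis image_eqI)
  qed
  have "UNIV - {0} \<subseteq> ff ` (GG :: (real^('n::{finite,wellorder})^('n::{finite,wellorder})) set)"
  proof
    fix r :: real assume "r \<in> UNIV - {0}"
    then have r: "r \<noteq> 0" by simp
    have "ff (Dm lo r :: real^('n::{finite,wellorder})^('n::{finite,wellorder})) = r" using lh r by (simp add: ff_def)
    then show "r \<in> ff ` (GG :: (real^('n::{finite,wellorder})^('n::{finite,wellorder})) set)" using Dm_G[OF r] by (metis image_eqI)
  qed
  moreover have "finite (ff ` (GG :: (real^('n::{finite,wellorder})^('n::{finite,wellorder})) set))" using sub fin by (meson finite_imageI finite_subset)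
  ultimately have "finite (UNIV - {0::real})" by (rule finite_subset)
  then show False by (simp add: infinite_UNIV_char_0)
qed

theorem theorem5p3:
  assumes "CARD('n) \<ge> 2"
  shows "top_R_infinity (upper_triangular_group :: (real^('n::{finite,wellorder})^('n::{finite,wellorder})) set)"
  unfolding top_R_infinity_def
  using infinite_classes lo_hi[OF assms] by blast

end
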